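(* Let $f\in\widetilde M$ with $\operatorname{ord}f=0$ and suppose $(D_1+D_2)f=\omega x_{12}f$ for a constant $\omega$. Then $[f]=F(p_0)=\sum_{i=-n_1}^{n_2}a_ip_0^i$ for some integers $n_1,n_2$ and coefficients $a_i\in M$.
   Context: Let $x_{11},x_{12},x_{13},x_{21},x_{22},x_{23},s_1,s_2,s_3$ be independent variables (coordinates on an open subset of $\operatorname{Mat}_3$, with $s_1=x_{13}x_{31}-x_{21}x_{23}$, $s_2$ the determinant of the $4\times4$ matrix with rows $(x_{21},x_{22},x_{23},0),(x_{31},x_{32},x_{33},0),(0,x_{11},x_{12},x_{13}),(0,x_{21},x_{22},x_{23})$, $s_3=\det X$). Let $p$ be the determinant of the $4\times4$ matrix with rows $(x_{11},x_{12},x_{13},0),(x_{21},x_{22},x_{23},0),(0,x_{11},x_{12},x_{13}),(0,x_{21},x_{22},x_{23})$; $p=p_0+x_{12}p_1+x_{12}^2p_2$ with $p_0=x_{11}x_{13}x_{22}^2+(x_{11}x_{23}-x_{13}x_{21})^2$, $p_1=x_{22}(x_{13}x_{21}+x_{11}x_{23})$, $p_2=x_{21}x_{23}$. Let $M=\mathbb C[x_{11},x_{13},x_{21},s_1,s_2,s_3]_{x_{11}x_{13}x_{21}}$, $\widehat M=M[x_{22},x_{23}]_{p_0}$, $\widetilde M=\widehat M[x_{12}]_p$ (localizations). For nonzero $f\in\widetilde M$, $\operatorname{ord}f$ is the largest $\nu\ge0$ with $f\in x_{12}^\nu\widetilde M$. If $\operatorname{ord}f=0$, $[f]$ denotes the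 unique element of $\widehat M$ with $f-[f]\in x_{12}\widetilde M$; if $\operatorname{ord} f>0$, $[f]=0$. The derivations are $D_1=\tfrac23x_{12}\big(-\partial_{x_{11}}+\partial_{x_{13}}+\partial_{x_{21}}+2\partial_{x_{22}}+\partial_{s_1}+2\partial_{s_2}\big)$ and $D_2=2(x_{13}x_{21}-x_{11}x_{23})\partial_{x_{22}}+2x_{13}x_{22}\partial_{x_{23}}$ (partials in the nine coordinates above). (For the Cremmer–Gervais Poisson bracket on $\operatorname{Mat}_3$ one has $\{x_{12},f\}=(D_1+D_2)f$ for all $f\in\widetilde M$.) *)

theory Defs
  imports "HOL-Analysis.Analysis"
begin

text \<open>Points are functions nat => complex; coordinate indices:
 0 = x11, 1 = x12, 2 = x13, 3 = x21, 4 = x22, 5 = x23, 6 = s1, 7 = s2, 8 = s3.\<close>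

type_synonym pt = "nat \<Rightarrow> complex"
type_synonym fn = "pt \<Rightarrow> complex"

inductive_set polyfun :: "nat set \<Rightarrow> fn set" for V :: "nat set" where
  pf_const: "(\<lambda>z. c) \<in> polyfun V"
| pf_var: "i \<in> V \<Longrightarrow> (\<lambda>z. z i) \<in> polyfun V"
| pf_add: "P \<in> polyfun V \<Longrightarrow> Q \<in> polyfun V \<Longrightarrow> (\<lambda>z. P z + Q z) \<in> polyfun V"
| pf_mult: "P \<in> polyfun V \<Longrightarrow> Q \<in> polyfun V \<Longrightarrow> (\<lambda>z. P z * Q z) \<in> polyfun V"

definition p0 :: fn where
  "p0 z = z 0 * z 2 * (z 4)^2 + (z 0 * z 5 - z 2 * z 3)^2"
definition p1 :: fn where
  "p1 z = z 4 * (z 2 * z 3 + z 0 * z 5)"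
definition p2 :: fn where
  "p2 z = z 3 * z 5"
definition pp :: fn where
  "pp z = p0 z + z 1 * p1 z + (z 1)^2 * p2 z"

text \<open>The open set on which all elements of the localizations are defined.
 Elements are represented canonically as functions vanishing outside U.\<close>
definition U :: "pt set" where
  "U = {z. z 0 \<noteq> 0 \<and> z 2 \<noteq> 0 \<and> z 3 \<noteq> 0 \<and> p0 z \<noteq> 0 \<and> pp z \<noteq> 0}"

definition M :: "fn set" where
  "M = {f. \<exists>P \<in> polyfun {0,2,3,6,7,8}. \<exists>k::nat.
          f = (\<lambda>z. if z \<in> U then P z / (z 0 * z 2 * z 3) ^ k else 0)}"

definition Mhat :: "fn set" where
  "Mhat = {f. \<exists>P \<in> polyfun {0,2,3,4,5,6,7,8}. \<exists>k::nat.
          f = (\<lambda>z. if z \<in> U then P z / (z 0 * z 2 * z 3 * p0 z) ^ k else 0)}"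

definition Mtilde :: "fn set" where
  "Mtilde = {f. \<exists>P \<in> polyfun {0..8}. \<exists>k::nat.
          f = (\<lambda>z. if z \<in> U then P z / (z 0 * z 2 * z 3 * p0 z * pp z) ^ k else 0)}"

definition x12pow_Mtilde :: "nat \<Rightarrow> fn set" where
  "x12pow_Mtilde \<nu> = (\<lambda>g. (\<lambda>z. (z 1) ^ \<nu> * g z)) ` Mtilde"

definition ord :: "fn \<Rightarrow> nat" where
  "ord f = (GREATEST \<nu>. f \<in> x12pow_Mtilde \<nu>)"

definition bracket :: "fn \<Rightarrow> fn" where
  "bracket f = (if ord f = 0 then (THE g. g \<in> Mhat \<and> (\<lambda>z. f z - g z) \<in> x12pow_Mtilde 1)
                else (\<lambda>z. 0))"

definition partial :: "nat \<Rightarrow> fn \<Rightarrow> fn" where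
  "partial i f z = deriv (\<lambda>t. f (z(i := t))) (z i)"

definition D1 :: "fn \<Rightarrow> fn" where
  "D1 f z = 2/3 * z 1 * (- partial 0 f z + partial 2 f z + partial 3 f z
       + 2 * partial 4 f z + partial 6 f z + 2 * partial 7 f z)"

definition D2 :: "fn \<Rightarrow> fn" where
  "D2 f z = 2 * (z 2 * z 3 - z 0 * z 5) * partial 4 f z + 2 * z 2 * z 4 * partial 5 f z"

end

theory Submission
  imports Defs
begin


lemma pf_mono: "P \<in> polyfun V \<Longrightarrow> V \<subseteq> W \<Longrightarrow> P \<in> polyfun W"
proof (induction rule: polyfun.induct)
  case (pf_const c) show ?case by (rule polyfun.pf_const)
next
  case (pf_var i) then show ?case by (intro polyfun.pf_var) auto
next
  case (pf_add P Q) then show ?case by (intro polyfun.pf_add) auto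
next
  case (pf_mult P Q) then show ?case by (intro polyfun.pf_mult) auto
qed

lemma pf_zero: "(\<lambda>z. 0) \<in> polyfun V" by (rule pf_const)
lemma pf_one: "(\<lambda>z. 1) \<in> polyfun V" by (rule pf_const)

lemma pf_pow: "P \<in> polyfun V \<Longrightarrow> (\<lambda>z. P z ^ n) \<in> polyfun V"
proof (induction n)
  case 0 then show ?case using pf_const[of 1] by simp
next
  case (Suc n)
  then show ?case using pf_mult[OF Suc.prems Suc.IH] by (simp add: mult.commute)
qed

lemma pf_sub: "P \<in> polyfun V \<Longrightarrow> Q \<in> polyfun V \<Longrightarrow> (\<lambda>z. P z - Q z) \<in> polyfun V"
proof -
  assume a: "P \<in> polyfun V" "Q \<in> polyfun V"
  have "(\<lambda>z. P z + (-1) * Q z) \<in> polyfun V" by (intro pf_add pf_mult pf_const a)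
  then show ?thesis by simp
qed

lemma pf_sum: "finite A \<Longrightarrow> (\<forall>i\<in>A. f i \<in> polyfun V) \<Longrightarrow> (\<lambda>z. \<Sum>i\<in>A. f i z) \<in> polyfun V"
proof (induction A rule: finite_induct)
  case empty then show ?case using pf_const[of 0] by simp
next
  case (insert x F)
  then show ?case using pf_add[of "f x" V "\<lambda>z. \<Sum>i\<in>F. f i z"] by simp
qed

lemma pf_indep: "P \<in> polyfun V \<Longrightarrow> i \<notin> V \<Longrightarrow> P (z(i:=v)) = P z"
  by (induction rule: polyfun.induct) auto

lemma pf_subst1: "P \<in> polyfun V \<Longrightarrow> (\<lambda>z. P (z(1:=0))) \<in> polyfun (V - {1})"
proof (induction rule: polyfun.induct)
  case (pf_var i)
  show ?case
  proof (cases "i = 1")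
    case True then show ?thesis by (simp add: pf_zero)
  next
    case False
    then have eq: "(\<lambda>z. (z(1 := 0)) i) = (\<lambda>z. z i)" by auto
    show ?thesis unfolding eq using False pf_var.hyps by (intro polyfun.pf_var) auto
  qed
next
  case (pf_const c) show ?case by (rule polyfun.pf_const)
next
  case (pf_add P Q) show ?case using pf_add.IH by (rule polyfun.pf_add)
next
  case (pf_mult P Q) show ?case using pf_mult.IH by (rule polyfun.pf_mult)
qed

lemma pf_div1: "P \<in> polyfun V \<Longrightarrow> \<exists>R\<in>polyfun V. \<forall>z. P z - P (z(1:=0)) = z 1 * R z"
proof (induction rule: polyfun.induct)
  case (pf_const c) then show ?case by (intro bexI[of _ "\<lambda>z. 0"]) (auto simp: pf_zero pf_one)
next
  case (pf_var i)
  then show ?case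
  proof (cases "i = 1")
    case True then show ?thesis by (intro bexI[of _ "\<lambda>z. 1"]) (auto simp: pf_zero pf_one)
  next
    case False then show ?thesis by (intro bexI[of _ "\<lambda>z. 0"]) (auto simp: pf_zero pf_one)
  qed
next
  case (pf_add P Q)
  then obtain R1 R2 where r: "R1 \<in> polyfun V" "R2 \<in> polyfun V" "\<forall>z. P z - P (z(1:=0)) = z 1 * R1 z"
    "\<forall>z. Q z - Q (z(1:=0)) = z 1 * R2 z" by blast
  have "\<forall>z. (P z + Q z) - (P (z(1:=0)) + Q (z(1:=0))) = z 1 * (R1 z + R2 z)"
  proof
    fix z
    have "(P z + Q z) - (P (z(1:=0)) + Q (z(1:=0))) = (P z - P (z(1:=0))) + (Q z - Q (z(1:=0)))" by simp
    also have "\<dots> = z 1 * R1 z + z 1 * R2 z" using r(3,4) by metis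
    also have "\<dots> = z 1 * (R1 z + R2 z)" by (simp add: distrib_left)
    finally show "(P z + Q z) - (P (z(1:=0)) + Q (z(1:=0))) = z 1 * (R1 z + R2 z)" .
  qed
  moreover have "(\<lambda>z. R1 z + R2 z) \<in> polyfun V" using r(1,2) by (rule polyfun.pf_add)
  ultimately show ?case by (rule bexI)
next
  case (pf_mult P Q)
  then obtain R1 R2 where r: "R1 \<in> polyfun V" "R2 \<in> polyfun V" "\<forall>z. P z - P (z(1:=0)) = z 1 * R1 z"
    "\<forall>z. Q z - Q (z(1:=0)) = z 1 * R2 z" by blast
  have p0: "(\<lambda>z. P (z(1:=0))) \<in> polyfun V"
    using pf_subst1[OF pf_mult.hyps(1)] pf_mono by blast
  have "\<forall>z. P z * Q z - P (z(1:=0)) * Q (z(1:=0)) = z 1 * (R1 z * Q z + P (z(1:=0)) * R2 z)"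
  proof
    fix z
    have "P z * Q z - P (z(1:=0)) * Q (z(1:=0)) = (P z - P (z(1:=0))) * Q z + P (z(1:=0)) * (Q z - Q (z(1:=0)))"
      by (simp add: algebra_simps)
    also have "\<dots> = (z 1 * R1 z) * Q z + P (z(1:=0)) * (z 1 * R2 z)"
      using r(3,4) by metis
    also have "\<dots> = z 1 * (R1 z * Q z + P (z(1:=0)) * R2 z)" by (simp add: algebra_simps)
    finally show "P z * Q z - P (z(1:=0)) * Q (z(1:=0)) = z 1 * (R1 z * Q z + P (z(1:=0)) * R2 z)" .
  qed
  moreover have "(\<lambda>z. R1 z * Q z + P (z(1:=0)) * R2 z) \<in> polyfun V"
    using r p0 pf_mult.hyps by (intro polyfun.pf_add polyfun.pf_mult)
  ultimately show ?case by (rule bexI)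
qed

definition E :: fn where "E z = z 0 * z 2 * z 3 * p0 z * pp z"

lemma U_eq: "U = {z. E z \<noteq> 0}"
  unfolding U_def E_def by auto

lemma p0_pf: "p0 \<in> polyfun {0..8}"
proof -
  have "(\<lambda>z. z 0 * z 2 * (z 4)^2 + (z 0 * z 5 - z 2 * z 3)^2) \<in> polyfun {0..8}"
    by (intro pf_pow pf_sub polyfun.pf_add polyfun.pf_mult polyfun.pf_var) auto
  then show ?thesis unfolding p0_def[abs_def] .
qed

lemma pp_pf: "pp \<in> polyfun {0..8}"
proof -
  have "(\<lambda>z. p0 z + z 1 * (z 4 * (z 2 * z 3 + z 0 * z 5)) + (z 1)^2 * (z 3 * z 5)) \<in> polyfun {0..8}"
    by (intro pf_pow pf_sub polyfun.pf_add polyfun.pf_mult polyfun.pf_var p0_pf) auto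
  then show ?thesis unfolding pp_def[abs_def] p1_def p2_def .
qed

lemma E_pf: "E \<in> polyfun {0..8}"
proof -
  have "(\<lambda>z. z 0 * z 2 * z 3 * p0 z * pp z) \<in> polyfun {0..8}"
    by (intro pf_pow pf_sub polyfun.pf_add polyfun.pf_mult polyfun.pf_var p0_pf pp_pf) auto
  then show ?thesis unfolding E_def[abs_def] .
qed



definition sig :: "pt \<Rightarrow> complex \<Rightarrow> pt" where
  "sig z Y = z(1:=0, 4:=Y, 5:= z 2 * z 3 / z 0)"

abbreviation "W0 \<equiv> {0::nat,2,3,6,7,8}"

lemma coeff_const_fn: "(a::fn) \<in> polyfun W \<Longrightarrow> (\<lambda>z. coeff [:a z:] m) \<in> polyfun W"
  by (cases m) (simp_all add: pf_zero)

lemma expand: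
  fixes P :: fn
  assumes "P \<in> polyfun V" "V \<subseteq> {0..8}"
  shows "\<exists>K N cp. (\<forall>m. (\<lambda>z. coeff (cp z) m) \<in> polyfun W0) \<and> (\<forall>z. degree (cp z) \<le> N) \<and>
     (\<forall>z Y. z 0 \<noteq> 0 \<longrightarrow> P (sig z Y) * z 0 ^ K = poly (cp z) Y)"
  using assms
proof (induction rule: polyfun.induct)
  case (pf_const c)
  show ?case
    by (rule exI[of _ 0], rule exI[of _ 0], rule exI[of _ "\<lambda>z. [:c:]"])
       (simp add: coeff_const_fn polyfun.pf_const)
next
  case (pf_var i)
  then have i: "i \<in> {0..8}" by auto
  consider "i = 1" | "i = 4" | "i = 5" | "i \<in> W0" using i by fastforce
  then show ?case
  proof cases
    case 1 then show ?thesis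
      by (intro exI[of _ 0] exI[of _ 0] exI[of _ "\<lambda>z. 0"]) (simp add: pf_zero sig_def)
  next
    case 2 then show ?thesis
      by (intro exI[of _ 0] exI[of _ 1] exI[of _ "\<lambda>z. [:0,1:]"]) (simp add: polyfun.pf_const sig_def)
  next
    case 3
    have "(\<lambda>z. z 2 * z 3) \<in> polyfun W0" by (intro polyfun.pf_mult polyfun.pf_var) auto
    with 3 show ?thesis
      by (intro exI[of _ 1] exI[of _ 0] exI[of _ "\<lambda>z. [:z 2 * z 3:]"]) (simp add: coeff_const_fn sig_def)
  next
    case 4
    then have "(\<lambda>z. z i) \<in> polyfun W0" by (intro polyfun.pf_var) auto
    with 4 show ?thesis
      by (intro exI[of _ 0] exI[of _ 0] exI[of _ "\<lambda>z. [:z i:]"]) (auto simp add: coeff_const_fn sig_def)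
  qed
next
  case (pf_add P Q)
  from pf_add.IH pf_add.prems obtain K1 N1 c1 where h1: "\<forall>m. (\<lambda>z. coeff (c1 z) m) \<in> polyfun W0"
     "\<forall>z. degree (c1 z) \<le> N1" "\<forall>z Y. z 0 \<noteq> 0 \<longrightarrow> P (sig z Y) * z 0 ^ K1 = poly (c1 z) Y" by blast
  from pf_add.IH pf_add.prems obtain K2 N2 c2 where h2: "\<forall>m. (\<lambda>z. coeff (c2 z) m) \<in> polyfun W0"
     "\<forall>z. degree (c2 z) \<le> N2" "\<forall>z Y. z 0 \<noteq> 0 \<longrightarrow> Q (sig z Y) * z 0 ^ K2 = poly (c2 z) Y" by blast
  let ?c = "\<lambda>z. smult (z 0 ^ K2) (c1 z) + smult (z 0 ^ K1) (c2 z)"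
  have "\<forall>m. (\<lambda>z. coeff (?c z) m) \<in> polyfun W0"
  proof
    fix m
    have "(\<lambda>z. z 0 ^ K2 * coeff (c1 z) m + z 0 ^ K1 * coeff (c2 z) m) \<in> polyfun W0"
      using h1(1) h2(1) by (intro polyfun.pf_add polyfun.pf_mult pf_pow polyfun.pf_var) auto
    then show "(\<lambda>z. coeff (?c z) m) \<in> polyfun W0" by simp
  qed
  moreover have "\<forall>z. degree (?c z) \<le> max N1 N2"
  proof
    fix z :: pt
    have "degree (?c z) \<le> max (degree (smult (z 0 ^ K2) (c1 z))) (degree (smult (z 0 ^ K1) (c2 z)))"
      by (rule degree_add_le_max)
    also have "\<dots> \<le> max N1 N2" using h1(2) h2(2) degree_smult_le
      by (meson max.mono order_trans)
    finally show "degree (?c z) \<le> max N1 N2" .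
  qed
  moreover have "\<forall>z Y. z 0 \<noteq> 0 \<longrightarrow> (P (sig z Y) + Q (sig z Y)) * z 0 ^ (K1 + K2) = poly (?c z) Y"
  proof (intro allI impI)
    fix z :: pt and Y :: complex assume z: "z 0 \<noteq> 0"
    have "(P (sig z Y) + Q (sig z Y)) * z 0 ^ (K1 + K2)
        = z 0 ^ K2 * (P (sig z Y) * z 0 ^ K1) + z 0 ^ K1 * (Q (sig z Y) * z 0 ^ K2)"
      by (simp add: power_add algebra_simps)
    also have "\<dots> = poly (?c z) Y" using h1(3) h2(3) z by simp
    finally show "(P (sig z Y) + Q (sig z Y)) * z 0 ^ (K1 + K2) = poly (?c z) Y" .
  qed

  moreover note calculation
  ultimately show ?case by - (rule exI[of _ "K1+K2"], rule exI[of _ "max N1 N2"], rule exI[of _ ?c], blast)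
next
  case (pf_mult P Q)
  from pf_mult.IH pf_mult.prems obtain K1 N1 c1 where h1: "\<forall>m. (\<lambda>z. coeff (c1 z) m) \<in> polyfun W0"
     "\<forall>z. degree (c1 z) \<le> N1" "\<forall>z Y. z 0 \<noteq> 0 \<longrightarrow> P (sig z Y) * z 0 ^ K1 = poly (c1 z) Y" by blast
  from pf_mult.IH pf_mult.prems obtain K2 N2 c2 where h2: "\<forall>m. (\<lambda>z. coeff (c2 z) m) \<in> polyfun W0"
     "\<forall>z. degree (c2 z) \<le> N2" "\<forall>z Y. z 0 \<noteq> 0 \<longrightarrow> Q (sig z Y) * z 0 ^ K2 = poly (c2 z) Y" by blast
  let ?c = "\<lambda>z. c1 z * c2 z"
  have "\<forall>m. (\<lambda>z. coeff (?c z) m) \<in> polyfun W0"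
  proof
    fix m
    have "(\<lambda>z. \<Sum>i\<le>m. coeff (c1 z) i * coeff (c2 z) (m - i)) \<in> polyfun W0"
      using h1(1) h2(1) by (intro pf_sum ballI polyfun.pf_mult) auto
    then show "(\<lambda>z. coeff (?c z) m) \<in> polyfun W0" by (simp add: coeff_mult)
  qed
  moreover have "\<forall>z. degree (?c z) \<le> N1 + N2"
  proof
    fix z :: pt
    have "degree (?c z) \<le> degree (c1 z) + degree (c2 z)" by (rule degree_mult_le)
    also have "\<dots> \<le> N1 + N2" using h1(2) h2(2) by (simp add: add_mono)
    finally show "degree (?c z) \<le> N1 + N2" .
  qed
  moreover have "\<forall>z Y. z 0 \<noteq> 0 \<longrightarrow> (P (sig z Y) * Q (sig z Y)) * z 0 ^ (K1 + K2) = poly (?c z) Y"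
  proof (intro allI impI)
    fix z :: pt and Y :: complex assume z: "z 0 \<noteq> 0"
    have "(P (sig z Y) * Q (sig z Y)) * z 0 ^ (K1 + K2)
        = (P (sig z Y) * z 0 ^ K1) * (Q (sig z Y) * z 0 ^ K2)"
      by (simp add: power_add algebra_simps)
    also have "\<dots> = poly (?c z) Y" using h1(3) h2(3) z by simp
    finally show "(P (sig z Y) * Q (sig z Y)) * z 0 ^ (K1 + K2) = poly (?c z) Y" .
  qed

  moreover note calculation
  ultimately show ?case by - (rule exI[of _ "K1+K2"], rule exI[of _ "N1+N2"], rule exI[of _ ?c], blast)
qed



abbreviation cv :: "pt \<Rightarrow> (complex \<Rightarrow> complex) \<Rightarrow> (complex \<Rightarrow> complex) \<Rightarrow> complex \<Rightarrow> pt" where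
  "cv w Y X s \<equiv> w(4 := Y s, 5 := X s)"

definition cd :: "pt set \<Rightarrow> fn \<Rightarrow> fn \<Rightarrow> fn \<Rightarrow> bool" where
  "cd A F F4 F5 \<longleftrightarrow> (\<forall>w Y X Y' X' s. cv w Y X s \<in> A \<longrightarrow> (Y has_field_derivative Y') (at s) \<longrightarrow>
      (X has_field_derivative X') (at s) \<longrightarrow>
      ((\<lambda>s. F (cv w Y X s)) has_field_derivative (F4 (cv w Y X s) * Y' + F5 (cv w Y X s) * X')) (at s))"

lemma cdD: "cd A F F4 F5 \<Longrightarrow> cv w Y X s \<in> A \<Longrightarrow> (Y has_field_derivative Y') (at s) \<Longrightarrow>
      (X has_field_derivative X') (at s) \<Longrightarrow>
      ((\<lambda>s. F (cv w Y X s)) has_field_derivative (F4 (cv w Y X s) * Y' + F5 (cv w Y X s) * X')) (at s)"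
  unfolding cd_def by blast

lemma cd_pf: "P \<in> polyfun V \<Longrightarrow> \<exists>P4 P5. cd UNIV P P4 P5"
proof (induction rule: polyfun.induct)
  case (pf_const c)
  show ?case unfolding cd_def by (rule exI[of _ "\<lambda>z. 0"], rule exI[of _ "\<lambda>z. 0"]) simp
next
  case (pf_var i)
  consider "i = 4" | "i = 5" | "i \<noteq> 4 \<and> i \<noteq> 5" by blast
  then show ?case
  proof cases
    case 1 then show ?thesis unfolding cd_def
      by (intro exI[of _ "\<lambda>z. 1"] exI[of _ "\<lambda>z. 0"]) simp
  next
    case 2 then show ?thesis unfolding cd_def
      by (intro exI[of _ "\<lambda>z. 0"] exI[of _ "\<lambda>z. 1"]) simp
  next
    case 3 then show ?thesis unfolding cd_def
      by (intro exI[of _ "\<lambda>z. 0"] exI[of _ "\<lambda>z. 0"]) simp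
  qed
next
  case (pf_add P Q)
  then obtain P4 P5 Q4 Q5 where h: "cd UNIV P P4 P5" "cd UNIV Q Q4 Q5" by blast
  have "cd UNIV (\<lambda>z. P z + Q z) (\<lambda>z. P4 z + Q4 z) (\<lambda>z. P5 z + Q5 z)"
    unfolding cd_def
  proof (intro allI impI)
    fix w :: pt and Y X :: "complex \<Rightarrow> complex" and Y' X' s :: complex
    assume d: "(Y has_field_derivative Y') (at s)" "(X has_field_derivative X') (at s)"
    show "((\<lambda>s. P (cv w Y X s) + Q (cv w Y X s)) has_field_derivative
           (P4 (cv w Y X s) + Q4 (cv w Y X s)) * Y' + (P5 (cv w Y X s) + Q5 (cv w Y X s)) * X') (at s)"
      by (rule DERIV_cong[OF DERIV_add[OF cdD[OF h(1) _ d] cdD[OF h(2) _ d]]]) (auto simp: algebra_simps)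
  qed
  then show ?case by blast
next
  case (pf_mult P Q)
  then obtain P4 P5 Q4 Q5 where h: "cd UNIV P P4 P5" "cd UNIV Q Q4 Q5" by blast
  have "cd UNIV (\<lambda>z. P z * Q z) (\<lambda>z. P4 z * Q z + P z * Q4 z) (\<lambda>z. P5 z * Q z + P z * Q5 z)"
    unfolding cd_def
  proof (intro allI impI)
    fix w :: pt and Y X :: "complex \<Rightarrow> complex" and Y' X' s :: complex
    assume d: "(Y has_field_derivative Y') (at s)" "(X has_field_derivative X') (at s)"
    show "((\<lambda>s. P (cv w Y X s) * Q (cv w Y X s)) has_field_derivative
           (P4 (cv w Y X s) * Q (cv w Y X s) + P (cv w Y X s) * Q4 (cv w Y X s)) * Y' +
           (P5 (cv w Y X s) * Q (cv w Y X s) + P (cv w Y X s) * Q5 (cv w Y X s)) * X') (at s)"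
      by (rule DERIV_cong[OF DERIV_mult[OF cdD[OF h(1) _ d] cdD[OF h(2) _ d]]]) (auto simp: algebra_simps)
  qed
  then show ?case by blast
qed

lemma alg_div: "((d1*y + d2*x)*q - p*(e1*y+e2*x))/(q*q) = (d1*q - p*e1)/(q*q)*y + (d2*q - p*e2)/(q*(q::complex))*x"
  by (cases "q=0") (simp_all add: field_simps)

lemma cd_divide:
  assumes "cd A P P4 P5" "cd A Q Q4 Q5" "\<And>z. z \<in> A \<Longrightarrow> Q z \<noteq> 0"
  shows "cd A (\<lambda>z. P z / Q z) (\<lambda>z. (P4 z * Q z - P z * Q4 z) / (Q z * Q z))
                              (\<lambda>z. (P5 z * Q z - P z * Q5 z) / (Q z * Q z))"
  unfolding cd_def
proof (intro allI impI)
  fix w :: pt and Y X :: "complex \<Rightarrow> complex" and Y' X' s :: complex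
  assume a: "cv w Y X s \<in> A" and d: "(Y has_field_derivative Y') (at s)" "(X has_field_derivative X') (at s)"
  show "((\<lambda>s. P (cv w Y X s) / Q (cv w Y X s)) has_field_derivative
     (P4 (cv w Y X s) * Q (cv w Y X s) - P (cv w Y X s) * Q4 (cv w Y X s)) / (Q (cv w Y X s) * Q (cv w Y X s)) * Y' +
     (P5 (cv w Y X s) * Q (cv w Y X s) - P (cv w Y X s) * Q5 (cv w Y X s)) / (Q (cv w Y X s) * Q (cv w Y X s)) * X') (at s)"
    by (rule DERIV_cong[OF DERIV_divide[OF cdD[OF assms(1) a d] cdD[OF assms(2) a d] assms(3)[OF a]]])
       (rule alg_div)
qed

lemma cd_mono: "cd B F F4 F5 \<Longrightarrow> A \<subseteq> B \<Longrightarrow> cd A F F4 F5"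
  unfolding cd_def by blast



lemma upd45: "(z::pt)(4 := t, 5 := z 5) = z(4 := t)" "(z::pt)(4 := z 4, 5 := t) = z(5 := t)"
  by (auto simp: fun_eq_iff)

lemma cd_line4:
  assumes "cd A F F4 F5" "z(4:=t) \<in> A"
  shows "((\<lambda>t. F (z(4:=t))) has_field_derivative F4 (z(4:=t))) (at t)"
proof -
  have "((\<lambda>s. F (cv z (\<lambda>s. s) (\<lambda>s. z 5) s)) has_field_derivative
     (F4 (cv z (\<lambda>s. s) (\<lambda>s. z 5) t) * 1 + F5 (cv z (\<lambda>s. s) (\<lambda>s. z 5) t) * 0)) (at t)"
    by (rule cdD[OF assms(1)]) (auto simp: upd45 assms(2) intro: derivative_eq_intros)
  then show ?thesis by (simp add: upd45)
qed

lemma cd_line5: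
  assumes "cd A F F4 F5" "z(5:=t) \<in> A"
  shows "((\<lambda>t. F (z(5:=t))) has_field_derivative F5 (z(5:=t))) (at t)"
proof -
  have "((\<lambda>s. F (cv z (\<lambda>s. z 4) (\<lambda>s. s) s)) has_field_derivative
     (F4 (cv z (\<lambda>s. z 4) (\<lambda>s. s) t) * 0 + F5 (cv z (\<lambda>s. z 4) (\<lambda>s. s) t) * 1)) (at t)"
    by (rule cdD[OF assms(1)]) (auto simp: upd45 assms(2) intro: derivative_eq_intros)
  then show ?thesis by (simp add: upd45)
qed

lemma partial_loc:
  assumes F: "\<And>t. z(i:=t) \<in> A \<Longrightarrow> ((\<lambda>t. F (z(i:=t))) has_field_derivative Fi (z(i:=t))) (at t)"
    and G: "\<And>t. ((\<lambda>t. G (z(i:=t))) has_field_derivative Gi (z(i:=t))) (at t)"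
    and A: "\<And>z. G z \<noteq> 0 \<Longrightarrow> z \<in> A"
    and fF: "\<And>z. G z \<noteq> 0 \<Longrightarrow> f z = F z"
    and z: "G z \<noteq> 0"
  shows "partial i f z = Fi z"
proof -
  have cont: "continuous_on UNIV (\<lambda>t. G (z(i:=t)))"
    by (rule continuous_at_imp_continuous_on) (auto intro: DERIV_isCont[OF G])
  have op: "open {t. G (z(i:=t)) \<noteq> 0}"
    by (rule open_Collect_neq[OF cont continuous_on_const])
  have zi: "z(i := z i) = z" by simp
  have mem: "z i \<in> {t. G (z(i:=t)) \<noteq> 0}" using z by simp
  have ev: "\<forall>\<^sub>F t in nhds (z i). F (z(i:=t)) = f (z(i:=t))"
    using eventually_nhds_in_open[OF op mem] by eventually_elim (simp add: fF)
  have "((\<lambda>t. F (z(i:=t))) has_field_derivative Fi z) (at (z i))"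
    using F[of "z i"] A[OF z] by simp
  then have "((\<lambda>t. f (z(i:=t))) has_field_derivative Fi z) (at (z i))"
    using DERIV_cong_ev[OF refl ev refl] by simp
  then show ?thesis unfolding partial_def by (rule DERIV_imp_deriv)
qed



lemma trig_exists:
  fixes \<alpha> \<beta> :: complex
  assumes "\<alpha>^2 + \<beta>^2 = 1"
  shows "\<exists>\<theta>. cos \<theta> = \<alpha> \<and> sin \<theta> = \<beta>"
proof -
  have prod: "(\<alpha> + \<i>*\<beta>) * (\<alpha> - \<i>*\<beta>) = 1" using assms by (simp add: algebra_simps power2_eq_square)
  then have nz: "\<alpha> + \<i>*\<beta> \<noteq> 0" by auto
  define \<theta> where "\<theta> = - \<i> * Ln (\<alpha> + \<i>*\<beta>)"
  have e1: "exp (\<i> * \<theta>) = \<alpha> + \<i>*\<beta>" unfolding \<theta>_def using nz by (simp add: exp_Ln)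
  have e2: "exp (- (\<i> * \<theta>)) = \<alpha> - \<i>*\<beta>"
  proof -
    have "exp (- (\<i> * \<theta>)) = inverse (exp (\<i> * \<theta>))" by (simp add: exp_minus)
    also have "\<dots> = \<alpha> - \<i>*\<beta>" using prod e1 by (simp add: inverse_unique mult.commute)
    finally show ?thesis .
  qed
  have "cos \<theta> = \<alpha>" unfolding cos_exp_eq e1 e2 by simp
  moreover have "sin \<theta> = \<beta>" unfolding sin_exp_eq e1 e2 by (simp add: field_simps)
  ultimately show ?thesis by blast
qed



lemma E_nz: "E z \<noteq> 0 \<Longrightarrow> z 0 \<noteq> 0 \<and> z 2 \<noteq> 0 \<and> z 3 \<noteq> 0 \<and> p0 z \<noteq> 0 \<and> pp z \<noteq> 0"
  unfolding E_def by auto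

lemma flow_invariant:
  assumes cdF: "cd {z. E z \<noteq> 0} F F4 F5"
    and D: "\<And>z. E z \<noteq> 0 \<Longrightarrow> z 1 = 0 \<Longrightarrow> (z 2 * z 3 - z 0 * z 5) * F4 z + z 2 * z 4 * F5 z = 0"
    and w: "E w \<noteq> 0" "w 1 = 0" and q: "q^2 = p0 w"
  shows "F w = F (w(4 := q / csqrt (w 0 * w 2), 5 := w 2 * w 3 / w 0))"
proof -
  from E_nz[OF w(1)] have w0: "w 0 \<noteq> 0" and w2: "w 2 \<noteq> 0" and w3: "w 3 \<noteq> 0" and p0w: "p0 w \<noteq> 0"
    by auto
  define c where "c = w 0 * w 2"
  define r where "r = csqrt c"
  have r2: "r^2 = c" unfolding r_def by simp
  have c0: "c \<noteq> 0" unfolding c_def using w0 w2 by simp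
  have r0: "r \<noteq> 0" using r2 c0 by auto
  define a where "a = w 2 * w 3"
  define yy where "yy = w 4"
  define uu where "uu = w 0 * w 5 - a"
  define Yf where "Yf = (\<lambda>s. yy * cos (2*r* s) - uu / r * sin (2*r* s))"
  define uf where "uf = (\<lambda>s. r * yy * sin (2*r* s) + uu * cos (2*r* s))"
  define Xf where "Xf = (\<lambda>s. (uf s + a) / w 0)"
  have dY: "(Yf has_field_derivative (-2 * uf s)) (at s)" for s
    unfolding Yf_def uf_def using r0
    by (auto intro!: derivative_eq_intros simp: field_simps)
  have dU: "(uf has_field_derivative (2 * c * Yf s)) (at s)" for s
    unfolding Yf_def uf_def using r0
    by (auto intro!: derivative_eq_intros simp: field_simps r2[symmetric] power2_eq_square)
  have dX: "(Xf has_field_derivative (2 * w 2 * Yf s)) (at s)" for s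
    unfolding Xf_def using w0
    by (auto intro!: derivative_eq_intros dU simp: field_simps c_def)
  have lev: "c * (Yf s)^2 + (uf s)^2 = c * yy^2 + uu^2" for s
  proof -
    define C where "C = cos (2*r * s)"
    define S where "S = sin (2*r * s)"
    have sc: "S^2 + C^2 = 1" unfolding S_def C_def by (rule sin_cos_squared_add)
    have "c * (Yf s)^2 = (r * yy * C - uu * S)^2"
      unfolding Yf_def C_def[symmetric] S_def[symmetric] r2[symmetric] using r0
      by (simp add: field_simps power2_eq_square)
    moreover have "uf s = r * yy * S + uu * C" unfolding uf_def C_def S_def by simp
    ultimately have "c * (Yf s)^2 + (uf s)^2 = (r^2 * yy^2 + uu^2) * (S^2 + C^2)"
      by (simp add: algebra_simps power2_eq_square)
    then show ?thesis using sc r2 by simp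
  qed
  have p0w': "p0 w = c * yy^2 + uu^2" unfolding p0_def c_def yy_def uu_def a_def by (simp add: power2_eq_square)
  have p0g: "p0 (cv w Yf Xf s) = p0 w" for s
  proof -
    have "p0 (cv w Yf Xf s) = c * (Yf s)^2 + (w 0 * Xf s - a)^2"
      unfolding p0_def c_def a_def by simp
    also have "w 0 * Xf s - a = uf s" unfolding Xf_def using w0 by simp
    also have "c * (Yf s)^2 + (uf s)^2 = c * yy^2 + uu^2" by (rule lev)
    also have "\<dots> = p0 w" by (rule p0w'[symmetric])
    finally show ?thesis .
  qed
  have Eg: "E (cv w Yf Xf s) \<noteq> 0" for s
    using p0g[of s] w0 w2 w3 p0w w(2) unfolding E_def pp_def by simp
  have dphi: "((\<lambda>s. F (cv w Yf Xf s)) has_field_derivative 0) (at s)" for s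
  proof -
    have h: "((\<lambda>s. F (cv w Yf Xf s)) has_field_derivative
        (F4 (cv w Yf Xf s) * (-2 * uf s) + F5 (cv w Yf Xf s) * (2 * w 2 * Yf s))) (at s)"
      by (rule cdD[OF cdF]) (use Eg dY dX in auto)
    have e1: "(w 2 * w 3 - w 0 * Xf s) * F4 (cv w Yf Xf s) + w 2 * Yf s * F5 (cv w Yf Xf s) = 0"
      using D[OF Eg[of s]] w(2) by simp
    have e2: "w 2 * w 3 - w 0 * Xf s = - uf s" unfolding Xf_def a_def using w0 by simp
    have e3: "(- uf s) * F4 (cv w Yf Xf s) + w 2 * Yf s * F5 (cv w Yf Xf s) = 0"
      using e1 unfolding e2 .
    have "F4 (cv w Yf Xf s) * (-2 * uf s) + F5 (cv w Yf Xf s) * (2 * w 2 * Yf s)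
       = 2 * ((- uf s) * F4 (cv w Yf Xf s) + w 2 * Yf s * F5 (cv w Yf Xf s))"
      by (simp add: algebra_simps)
    also have "\<dots> = 0" unfolding e3 by simp
    finally have "F4 (cv w Yf Xf s) * (-2 * uf s) + F5 (cv w Yf Xf s) * (2 * w 2 * Yf s) = 0" .
    with h show ?thesis by (rule DERIV_cong)
  qed
  obtain C where C: "\<forall>s\<in>UNIV. F (cv w Yf Xf s) = C"
    using has_field_derivative_zero_constant[of UNIV "\<lambda>s. F (cv w Yf Xf s)"] dphi by auto
  have at0: "cv w Yf Xf 0 = w"
    unfolding Yf_def Xf_def uf_def uu_def yy_def a_def using w0 by (auto simp: fun_eq_iff)
  have q0: "q \<noteq> 0" using q p0w by auto
  have qq: "q^2 = r^2 * yy^2 + uu^2" using q p0w' r2 by simp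
  have "(r * yy / q)^2 + (- uu / q)^2 = (r^2 * yy^2 + uu^2) / q^2"
    using q0 by (simp add: field_simps power2_eq_square)
  also have "\<dots> = 1" using q0 by (simp add: qq[symmetric])
  finally have "(r * yy / q)^2 + (- uu / q)^2 = 1" .
  then obtain \<theta> where th: "cos \<theta> = r * yy / q" "sin \<theta> = - uu / q" using trig_exists by blast
  define s1 where "s1 = \<theta> / (2 * r)"
  have ts: "2 * r * s1 = \<theta>" unfolding s1_def using r0 by simp
  have u1: "uf s1 = 0" unfolding uf_def ts th using q0 by (simp add: field_simps)
  have Y1: "Yf s1 = q / r"
  proof -
    have "Yf s1 = (c * yy^2 + uu^2) / (r * q)" unfolding Yf_def ts th using q0 r0
      by (simp add: field_simps power2_eq_square r2[symmetric])
    also have "c * yy^2 + uu^2 = q^2" using q p0w' by simp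
    also have "q^2 / (r * q) = q / r" using q0 r0 by (simp add: field_simps power2_eq_square)
    finally show ?thesis .
  qed
  have X1: "Xf s1 = w 2 * w 3 / w 0" unfolding Xf_def u1 a_def by simp
  have "F w = C" using C at0 by (metis UNIV_I)
  also have "C = F (cv w Yf Xf s1)" using C by simp
  finally show ?thesis using Y1 X1 unfolding r_def c_def by simp
qed



lemma p0_upd1[simp]: "p0 (z(1:=v)) = p0 z" "p0 (z(Suc 0:=v)) = p0 z"
  by (simp_all add: p0_def)

lemma pp_upd10[simp]: "pp (z(1:=0)) = p0 z" "pp (z(Suc 0:=0)) = p0 z"
  by (simp_all add: pp_def p1_def p2_def p0_def)

lemma E_upd10[simp]: "E (z(1:=0)) = z 0 * z 2 * z 3 * p0 z * p0 z" "E (z(Suc 0:=0)) = z 0 * z 2 * z 3 * p0 z * p0 z"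
  unfolding E_def by simp_all

lemma U_upd10: "z \<in> U \<Longrightarrow> z(1:=0) \<in> U"
  unfolding U_def by simp

lemma set_minus1: "{0..8::nat} - {1} \<subseteq> {0,2,3,4,5,6,7,8}"
  by auto

lemma bracket_char:
  fixes P :: fn
  assumes fdef: "f = (\<lambda>z. if z \<in> U then P z / (z 0 * z 2 * z 3 * p0 z * pp z)^k else 0)"
    and P: "P \<in> polyfun {0..8}" and ord: "ord f = 0"
  shows "bracket f = (\<lambda>z. if z \<in> U then f (z(1:=0)) else 0)"
proof -
  define g0 where "g0 = (\<lambda>z. if z \<in> U then f (z(1:=0)) else 0)"
  have fE: "f z = (if z \<in> U then P z / E z ^ k else 0)" for z
    unfolding fdef E_def by simp
  have g0U: "z \<in> U \<Longrightarrow> g0 z = P (z(1:=0)) / E (z(1:=0)) ^ k" for z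
    unfolding g0_def using U_upd10 fE by simp
  have P0: "(\<lambda>z. P (z(1:=0))) \<in> polyfun {0..8}"
    using pf_subst1[OF P] pf_mono by blast
  have g0M: "g0 \<in> Mhat"
  proof -
    have num: "(\<lambda>z. P (z(1:=0)) * (z 0 * z 2 * z 3) ^ k) \<in> polyfun {0,2,3,4,5,6,7,8}"
      using pf_mono[OF pf_subst1[OF P] set_minus1]
      by (intro polyfun.pf_mult pf_pow polyfun.pf_var) auto
    have eq: "g0 = (\<lambda>z. if z \<in> U then P (z(1:=0)) * (z 0 * z 2 * z 3) ^ k / (z 0 * z 2 * z 3 * p0 z) ^ (2*k) else 0)"
    proof (rule ext)
      fix z
      show "g0 z = (if z \<in> U then P (z(1:=0)) * (z 0 * z 2 * z 3) ^ k / (z 0 * z 2 * z 3 * p0 z) ^ (2*k) else 0)"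
      proof (cases "z \<in> U")
        case True
        then have nz: "z 0 \<noteq> 0" "z 2 \<noteq> 0" "z 3 \<noteq> 0" "p0 z \<noteq> 0" unfolding U_def by auto
        define B where "B = z 0 * z 2 * z 3"
        have B0: "B \<noteq> 0" unfolding B_def using nz by simp
        have sq: "(B * p0 z)^2 = (B * p0 z * p0 z) * B" by (simp add: power2_eq_square)
        have "(B * p0 z) ^ (2*k) = ((B * p0 z)^2) ^ k" by (simp only: power_mult)
        also have "\<dots> = ((B * p0 z * p0 z) * B) ^ k" by (simp only: sq)
        also have "\<dots> = (B * p0 z * p0 z) ^ k * B ^ k" by (rule power_mult_distrib)
        finally have "(B * p0 z) ^ (2*k) = (B * p0 z * p0 z) ^ k * B ^ k" .
        then have "P (z(1:=0)) * B ^ k / (B * p0 z) ^ (2*k) = P (z(1:=0)) / (B * p0 z * p0 z) ^ k"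
          using B0 by simp
        moreover have "g0 z = P (z(1:=0)) / (B * p0 z * p0 z) ^ k"
          using g0U[OF True] unfolding B_def by simp
        ultimately show ?thesis using True unfolding B_def by simp
      next
        case False then show ?thesis unfolding g0_def by simp
      qed
    qed
    show ?thesis unfolding Mhat_def mem_Collect_eq
      apply (rule bexI[OF _ num])
      apply (rule exI[of _ "2*k"])
      using eq by simp
  qed
  have diffM: "(\<lambda>z. f z - g0 z) \<in> x12pow_Mtilde 1"
  proof -
    define Nm where "Nm = (\<lambda>z. P z * E (z(1:=0)) ^ k - P (z(1:=0)) * E z ^ k)"
    have E0: "(\<lambda>z. E (z(1:=0))) \<in> polyfun {0..8}"
      using pf_subst1[OF E_pf] pf_mono by blast
    have Nmp: "Nm \<in> polyfun {0..8}" unfolding Nm_def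
      using P P0 E0 E_pf by (intro pf_sub polyfun.pf_mult pf_pow)
    obtain R where R: "R \<in> polyfun {0..8}" "\<And>z. Nm z - Nm (z(1:=0)) = z 1 * R z"
      using pf_div1[OF Nmp] by blast
    have Nm0: "Nm (z(1:=0)) = 0" for z unfolding Nm_def by simp
    have NR: "Nm z = z 1 * R z" for z using R(2)[of z] Nm0[of z] by simp
    define h where "h = (\<lambda>z. if z \<in> U then R z * (z 0 * z 2 * z 3 * (pp z)^2) ^ k
                         / (z 0 * z 2 * z 3 * p0 z * pp z) ^ (3*k) else 0)"
    have hM: "h \<in> Mtilde"
    proof -
      have num: "(\<lambda>z. R z * (z 0 * z 2 * z 3 * (pp z)^2) ^ k) \<in> polyfun {0..8}"
        using R(1) pp_pf by (intro polyfun.pf_mult pf_pow polyfun.pf_var) auto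
      show ?thesis unfolding Mtilde_def h_def mem_Collect_eq
        apply (rule bexI[OF _ num])
        apply (rule exI[of _ "3*k"])
        by simp
    qed
    have "(\<lambda>z. f z - g0 z) = (\<lambda>z. z 1 ^ 1 * h z)"
    proof (rule ext)
      fix z
      show "f z - g0 z = z 1 ^ 1 * h z"
      proof (cases "z \<in> U")
        case True
        then have nz: "z 0 \<noteq> 0" "z 2 \<noteq> 0" "z 3 \<noteq> 0" "p0 z \<noteq> 0" "pp z \<noteq> 0" unfolding U_def by auto
        have "f z - g0 z = P z / E z ^ k - P (z(1:=0)) / E (z(1:=0)) ^ k"
          using fE g0U True by simp
        also have "\<dots> = Nm z / (E z ^ k * E (z(1:=0)) ^ k)"
        proof -
          have "E z \<noteq> 0" "E (z(1:=0)) \<noteq> 0" using nz unfolding E_def by simp_all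
          then show ?thesis unfolding Nm_def by (simp add: diff_frac_eq)
        qed
        also have "\<dots> = z 1 * R z / (E z ^ k * E (z(1:=0)) ^ k)" by (simp add: NR)
        also have "\<dots> = z 1 ^ 1 * h z"
        proof -
          define G where "G = z 0 * z 2 * z 3 * (pp z)^2"
          have G0: "G \<noteq> 0" unfolding G_def using nz by simp
          have EEG: "E z * E (z(1:=0)) * G = E z ^ 3"
            unfolding G_def E_upd10 E_def by (simp add: power2_eq_square power3_eq_cube algebra_simps)
          have "E z ^ k * E (z(1:=0)) ^ k * G ^ k = (E z * E (z(1:=0)) * G) ^ k"
            by (simp only: power_mult_distrib)
          also have "\<dots> = (E z ^ 3) ^ k" by (simp only: EEG)
          also have "\<dots> = E z ^ (3*k)" by (simp add: power_mult)
          finally have "E z ^ k * E (z(1:=0)) ^ k * G ^ k = E z ^ (3*k)" .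
          moreover have "h z = R z * G ^ k / E z ^ (3*k)" unfolding h_def G_def E_def using True by simp
          ultimately have "h z = R z * G ^ k / (E z ^ k * E (z(1:=0)) ^ k * G ^ k)" by simp
          also have "\<dots> = R z / (E z ^ k * E (z(1:=0)) ^ k)" using G0 by simp
          finally show ?thesis by simp
        qed
        finally show ?thesis .
      next
        case False then show ?thesis unfolding g0_def h_def fdef by simp
      qed
    qed
    then show ?thesis unfolding x12pow_Mtilde_def using hM by blast
  qed
  have uniq: "g = g0" if g: "g \<in> Mhat" "(\<lambda>z. f z - g z) \<in> x12pow_Mtilde 1" for g
  proof (rule ext)
    fix z
    obtain Pg kg where Pg: "Pg \<in> polyfun {0,2,3,4,5,6,7,8}"
      "g = (\<lambda>z. if z \<in> U then Pg z / (z 0 * z 2 * z 3 * p0 z) ^ kg else 0)"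
      using g(1) unfolding Mhat_def by blast
    obtain h where h: "(\<lambda>z. f z - g z) = (\<lambda>z. z 1 ^ 1 * h z)"
      using g(2) unfolding x12pow_Mtilde_def by blast
    show "g z = g0 z"
    proof (cases "z \<in> U")
      case True
      have "g z = g (z(1:=0))" using Pg True U_upd10 pf_indep[OF Pg(1), of 1] by simp
      also have "\<dots> = f (z(1:=0))" using fun_cong[OF h, of "z(1:=0)"] by simp
      finally show ?thesis unfolding g0_def using True by simp
    next
      case False then show ?thesis unfolding g0_def using Pg by simp
    qed
  qed
  have "(THE g. g \<in> Mhat \<and> (\<lambda>z. f z - g z) \<in> x12pow_Mtilde 1) = g0"
  proof (rule the_equality)
    show "g0 \<in> Mhat \<and> (\<lambda>z. f z - g0 z) \<in> x12pow_Mtilde 1" using g0M diffM by simp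
  next
    fix g assume "g \<in> Mhat \<and> (\<lambda>z. f z - g z) \<in> x12pow_Mtilde 1"
    then show "g = g0" using uniq by blast
  qed
  then show ?thesis unfolding bracket_def g0_def using ord by simp
qed



lemma poly_sum_lt: "degree p < NN \<Longrightarrow> poly p Y = (\<Sum>m<NN. coeff p m * Y^m)"
  for p :: "complex poly"
proof -
  assume d: "degree p < NN"
  have "poly p Y = (\<Sum>m\<le>degree p. coeff p m * Y^m)" by (rule poly_altdef)
  also have "\<dots> = (\<Sum>m<NN. coeff p m * Y^m)"
    by (rule sum.mono_neutral_left) (use d in \<open>auto simp: coeff_eq_0\<close>)
  finally show ?thesis .
qed

lemma even_sum: "(\<Sum>m<2*n. c m * (Y^m + (-Y)^m)) = 2 * (\<Sum>j<n. c (2*j) * (Y^2)^j)"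
  for c :: "nat \<Rightarrow> complex"
proof (induction n)
  case 0 then show ?case by simp
next
  case (Suc n)
  have e: "2 * Suc n = Suc (Suc (2*n))" by simp
  have t1: "c (2*n) * (Y^(2*n) + (-Y)^(2*n)) = 2 * (c (2*n) * (Y^2)^n)"
    by (simp only: power_mult power2_minus) simp
  have t2: "c (Suc (2*n)) * (Y^(Suc (2*n)) + (-Y)^(Suc (2*n))) = 0"
    by (simp only: power_Suc power_mult power2_minus) simp
  have "(\<Sum>m<2 * Suc n. c m * (Y^m + (-Y)^m))
      = (\<Sum>m<2*n. c m * (Y^m + (-Y)^m)) + c (2*n) * (Y^(2*n) + (-Y)^(2*n))
        + c (Suc (2*n)) * (Y^(Suc (2*n)) + (-Y)^(Suc (2*n)))"
    unfolding e by (simp only: sum.lessThan_Suc)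
  also have "\<dots> = 2 * (\<Sum>j<n. c (2*j) * (Y^2)^j) + 2 * (c (2*n) * (Y^2)^n)"
    unfolding t1 t2 Suc.IH by simp
  also have "\<dots> = 2 * (\<Sum>j<Suc n. c (2*j) * (Y^2)^j)" by (simp add: algebra_simps)
  finally show ?case .
qed

lemma term_eq:
  fixes C t z0 z2 z3 :: complex
  assumes "t \<noteq> 0" "z0 \<noteq> 0" "z2 \<noteq> 0" "z3 \<noteq> 0"
  shows "C / (z0^K * (z0*z2*z3)^k * (z0*z2)^j) * (t^j / t^(2*k))
       = C * (t / (z0*z2))^j / (z0^K * (z0*z2*z3*t*t)^k)"
proof -
  have "t^(2*k) = (t*t)^k" by (simp add: power_mult power2_eq_square)
  then show ?thesis using assms by (simp add: power_mult_distrib power_divide field_simps)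
qed



lemma main_formula:
  fixes P :: fn and f :: fn
  assumes fdef: "f = (\<lambda>z. if z \<in> U then P z / (z 0 * z 2 * z 3 * p0 z * pp z)^k else 0)"
    and P: "P \<in> polyfun {0..8}"
    and hyp: "\<forall>z\<in>U. D1 f z + D2 f z = \<omega> * z 1 * f z"
  shows "\<exists>K n cp. (\<forall>m. (\<lambda>z. coeff (cp z) m) \<in> polyfun W0) \<and>
     (\<forall>w. E w \<noteq> 0 \<longrightarrow> w 1 = 0 \<longrightarrow>
        f w = (\<Sum>j<n. coeff (cp w) (2*j) * (p0 w / (w 0 * w 2))^j) / (w 0 ^ K * (w 0 * w 2 * w 3 * p0 w * p0 w)^k))"
proof -
  define Ek where "Ek = (\<lambda>z. E z ^ k)"
  have Ekp: "Ek \<in> polyfun {0..8}" unfolding Ek_def by (rule pf_pow[OF E_pf])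
  define F where "F = (\<lambda>z. P z / Ek z)"
  have fE: "E z \<noteq> 0 \<Longrightarrow> f z = F z" for z
    unfolding fdef F_def Ek_def U_eq by (simp add: E_def)
  obtain P4 P5 where cdP: "cd UNIV P P4 P5" using cd_pf[OF P] by blast
  obtain Q4 Q5 where cdQ: "cd UNIV Ek Q4 Q5" using cd_pf[OF Ekp] by blast
  obtain G4 G5 where cdE: "cd UNIV E G4 G5" using cd_pf[OF E_pf] by blast
  define F4 where "F4 = (\<lambda>z. (P4 z * Ek z - P z * Q4 z) / (Ek z * Ek z))"
  define F5 where "F5 = (\<lambda>z. (P5 z * Ek z - P z * Q5 z) / (Ek z * Ek z))"
  have cdF: "cd {z. E z \<noteq> 0} F F4 F5"
    unfolding F_def F4_def F5_def
    by (rule cd_divide[OF cd_mono[OF cdP] cd_mono[OF cdQ]]) (auto simp: Ek_def)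
  have part4: "E z \<noteq> 0 \<Longrightarrow> partial 4 f z = F4 z" for z
    by (rule partial_loc[where A = "{z. E z \<noteq> 0}" and G = E and Gi = G4 and F = F])
       (rule cd_line4[OF cdF], assumption, rule cd_line4[OF cdE], simp, simp, simp add: fE, simp)
  have part5: "E z \<noteq> 0 \<Longrightarrow> partial 5 f z = F5 z" for z
    by (rule partial_loc[where A = "{z. E z \<noteq> 0}" and G = E and Gi = G5 and F = F])
       (rule cd_line5[OF cdF], assumption, rule cd_line5[OF cdE], simp, simp, simp add: fE, simp)
  have Dz: "(z 2 * z 3 - z 0 * z 5) * F4 z + z 2 * z 4 * F5 z = 0" if z: "E z \<noteq> 0" "z 1 = 0" for z
  proof -
    have "z \<in> U" unfolding U_eq using z(1) by simp
    then have "D1 f z + D2 f z = \<omega> * z 1 * f z" using hyp by blast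
    moreover have "D1 f z = 0" unfolding D1_def using z by simp
    ultimately have "D2 f z = 0" using z by simp
    then have "2 * ((z 2 * z 3 - z 0 * z 5) * F4 z + z 2 * z 4 * F5 z) = 0"
      unfolding D2_def part4[OF z(1)] part5[OF z(1)] by (simp add: algebra_simps)
    then show ?thesis by (metis mult_eq_0_iff zero_neq_numeral)
  qed
  obtain K N cp where ex: "\<forall>m. (\<lambda>z. coeff (cp z) m) \<in> polyfun W0" "\<forall>z. degree (cp z) \<le> N"
     "\<forall>z Y. z 0 \<noteq> 0 \<longrightarrow> P (sig z Y) * z 0 ^ K = poly (cp z) Y"
    using expand[OF P] by blast
  define n where "n = Suc N"
  have val: "f w = poly (cp w) (q / csqrt (w 0 * w 2)) / (w 0 ^ K * (w 0 * w 2 * w 3 * p0 w * p0 w)^k)"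
    if w: "E w \<noteq> 0" "w 1 = 0" and q: "q^2 = p0 w" for w q
  proof -
    define r where "r = csqrt (w 0 * w 2)"
    have nz: "w 0 \<noteq> 0" "w 2 \<noteq> 0" "w 3 \<noteq> 0" "p0 w \<noteq> 0" using E_nz[OF w(1)] by auto
    have r2: "r^2 = w 0 * w 2" unfolding r_def by simp
    have r0: "r \<noteq> 0" using r2 nz by auto
    have pt: "w(4 := q / r, 5 := w 2 * w 3 / w 0) = sig w (q / r)"
      unfolding sig_def using w(2) by (auto simp: fun_eq_iff)
    have p0s: "p0 (sig w (q/r)) = p0 w"
    proof -
      have "p0 (sig w (q/r)) = w 0 * w 2 * (q/r)^2"
        unfolding p0_def sig_def using nz by simp
      also have "\<dots> = q^2" using r2 r0 nz by (simp add: power_divide)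
      finally show ?thesis using q by simp
    qed
    have Es: "E (sig w (q/r)) = w 0 * w 2 * w 3 * p0 w * p0 w"
    proof -
      have "pp (sig w (q/r)) = p0 (sig w (q/r))" unfolding pp_def sig_def by simp
      then show ?thesis unfolding E_def using p0s by (simp add: sig_def)
    qed
    have "f w = F w" using fE w by simp
    also have "\<dots> = F (sig w (q/r))" using flow_invariant[OF cdF Dz w q] pt unfolding r_def by simp
    also have "\<dots> = P (sig w (q/r)) / (w 0 * w 2 * w 3 * p0 w * p0 w)^k"
      unfolding F_def Ek_def Es ..
    also have "P (sig w (q/r)) = poly (cp w) (q/r) / w 0 ^ K"
      using ex(3) nz by (simp add: eq_divide_eq)
    finally show ?thesis unfolding r_def by simp
  qed
  have main: "f w = (\<Sum>j<n. coeff (cp w) (2*j) * (p0 w / (w 0 * w 2))^j) / (w 0 ^ K * (w 0 * w 2 * w 3 * p0 w * p0 w)^k)"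
    if w: "E w \<noteq> 0" "w 1 = 0" for w
  proof -
    define q where "q = csqrt (p0 w)"
    define r where "r = csqrt (w 0 * w 2)"
    define Den where "Den = w 0 ^ K * (w 0 * w 2 * w 3 * p0 w * p0 w)^k"
    have q2: "q^2 = p0 w" "(-q)^2 = p0 w" unfolding q_def by simp_all
    have r2: "r^2 = w 0 * w 2" unfolding r_def by simp
    have v1: "f w = poly (cp w) (q / r) / Den" using val[OF w q2(1)] unfolding r_def Den_def .
    have v2: "f w = poly (cp w) (- (q / r)) / Den" using val[OF w q2(2)] unfolding r_def Den_def by simp
    have deg: "degree (cp w) < 2 * n" using ex(2)[rule_format, of w] unfolding n_def by simp
    have "2 * f w = f w + f w" by simp
    also have "\<dots> = poly (cp w) (q / r) / Den + poly (cp w) (- (q / r)) / Den"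
      by (rule arg_cong2[where f="(+)", OF v1 v2])
    also have "\<dots> = (poly (cp w) (q / r) + poly (cp w) (- (q / r))) / Den"
      by (simp add: add_divide_distrib)
    also have "poly (cp w) (q / r) + poly (cp w) (- (q / r))
       = (\<Sum>m<2*n. coeff (cp w) m * ((q/r)^m + (-(q/r))^m))"
      unfolding poly_sum_lt[OF deg] by (simp add: sum.distrib algebra_simps)
    also have "\<dots> = 2 * (\<Sum>j<n. coeff (cp w) (2*j) * ((q/r)^2)^j)" by (rule even_sum)
    also have "(q/r)^2 = p0 w / (w 0 * w 2)" using q2 r2 by (simp add: power_divide)
    finally have "2 * f w = 2 * (\<Sum>j<n. coeff (cp w) (2*j) * (p0 w / (w 0 * w 2))^j) / Den" .
    then have "2 * f w = 2 * ((\<Sum>j<n. coeff (cp w) (2*j) * (p0 w / (w 0 * w 2))^j) / Den)"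
      by (simp only: times_divide_eq_right)
    then show ?thesis unfolding Den_def by (rule mult_left_cancel[THEN iffD1, rotated]) simp
  qed
  show ?thesis using ex(1) main by blast
qed



lemma reidx: "(\<Sum>i\<in>{-int m..int n - 1 - int m}. G i) = (\<Sum>j<n. G (int j - int m))"
  for G :: "int \<Rightarrow> complex"
  by (rule sum.reindex_bij_witness[of _ "\<lambda>j. int j - int m" "\<lambda>i. nat (i + int m)"]) auto

lemma powi_split: "t \<noteq> 0 \<Longrightarrow> t powi (int j - int m) = t^j / t^m"
  for t :: complex
  by (simp add: power_int_diff)

lemma coefM:
  assumes C: "C \<in> polyfun W0"
  shows "(\<lambda>z. if z \<in> U then C z / (z 0 ^ K * (z 0 * z 2 * z 3)^k * (z 0 * z 2)^j) else 0) \<in> M"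
proof -
  have num: "(\<lambda>z. C z * z 2 ^ K * z 3 ^ (K + j)) \<in> polyfun W0"
    using C by (intro polyfun.pf_mult pf_pow polyfun.pf_var) auto
  have eq: "C z / (z 0 ^ K * (z 0 * z 2 * z 3)^k * (z 0 * z 2)^j)
      = C z * z 2 ^ K * z 3 ^ (K + j) / (z 0 * z 2 * z 3 * 1) ^ (K + k + j)" if z: "z \<in> U" for z
  proof -
    have nz: "z 0 \<noteq> 0" "z 2 \<noteq> 0" "z 3 \<noteq> 0" using z unfolding U_def by auto
    define Y where "Y = z 0 ^ K * (z 0 * z 2 * z 3)^k * (z 0 * z 2)^j"
    define X where "X = z 2 ^ K * z 3 ^ (K + j)"
    have X0: "X \<noteq> 0" unfolding X_def using nz by simp
    have "(z 0 * z 2 * z 3 * 1) ^ (K + k + j) = Y * X"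
      unfolding X_def Y_def by (simp add: power_add power_mult_distrib algebra_simps)
    then have "C z * z 2 ^ K * z 3 ^ (K + j) / (z 0 * z 2 * z 3 * 1) ^ (K + k + j) = C z * X / (Y * X)"
      unfolding X_def by (simp add: mult.assoc)
    also have "\<dots> = C z / Y" using X0 by simp
    finally show ?thesis unfolding Y_def by simp
  qed
  show ?thesis unfolding M_def mem_Collect_eq
    apply (rule bexI[OF _ num])
    apply (rule exI[of _ "K + k + j"])
    using eq by (auto simp: fun_eq_iff)
qed



theorem lemma11:
  fixes f :: fn and \<omega> :: complex
  assumes "f \<in> Mtilde" and "f \<noteq> (\<lambda>z. 0)" and "ord f = 0"
    and "\<forall>z\<in>U. D1 f z + D2 f z = \<omega> * z 1 * f z"
  shows "\<exists>(n1::int) (n2::int) (a :: int \<Rightarrow> fn).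
           (\<forall>i\<in>{-n1..n2}. a i \<in> M) \<and>
           bracket f = (\<lambda>z. \<Sum>i\<in>{-n1..n2}. a i z * (p0 z) powi i)"
proof -
  obtain P k where P: "P \<in> polyfun {0..8}"
    and fdef: "f = (\<lambda>z. if z \<in> U then P z / (z 0 * z 2 * z 3 * p0 z * pp z)^k else 0)"
    using assms(1) unfolding Mtilde_def by blast
  have br: "bracket f = (\<lambda>z. if z \<in> U then f (z(1:=0)) else 0)"
    by (rule bracket_char[OF fdef P assms(3)])
  obtain K n cp where cpP: "\<forall>m. (\<lambda>z. coeff (cp z) m) \<in> polyfun W0"
    and mainf: "\<forall>w. E w \<noteq> 0 \<longrightarrow> w 1 = 0 \<longrightarrow>
        f w = (\<Sum>j<n. coeff (cp w) (2*j) * (p0 w / (w 0 * w 2))^j) / (w 0 ^ K * (w 0 * w 2 * w 3 * p0 w * p0 w)^k)"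
    using main_formula[OF fdef P assms(4)] by blast
  define a :: "int \<Rightarrow> fn" where "a = (\<lambda>i z. if z \<in> U then coeff (cp z) (2 * nat (i + int (2*k)))
       / (z 0 ^ K * (z 0 * z 2 * z 3)^k * (z 0 * z 2)^(nat (i + int (2*k)))) else 0)"
  have aM: "a i \<in> M" for i
    unfolding a_def using coefM[OF cpP[rule_format, of "2 * nat (i + int (2*k))"]] by simp
  have sumeq: "bracket f z = (\<Sum>i\<in>{-int (2*k)..int n - 1 - int (2*k)}. a i z * (p0 z) powi i)" for z
  proof (cases "z \<in> U")
    case False then show ?thesis unfolding br a_def by simp
  next
    case True
    then have nz: "z 0 \<noteq> 0" "z 2 \<noteq> 0" "z 3 \<noteq> 0" "p0 z \<noteq> 0" unfolding U_def by auto
    define w where "w = z(1:=0)"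
    have Ew: "E w \<noteq> 0" unfolding w_def using nz by simp
    have cw: "coeff (cp w) m = coeff (cp z) m" for m
      unfolding w_def using pf_indep[OF cpP[rule_format, of m], of 1 z 0] by simp
    have "bracket f z = f w" unfolding br w_def using True by simp
    also have "\<dots> = (\<Sum>j<n. coeff (cp z) (2*j) * (p0 z / (z 0 * z 2))^j) / (z 0 ^ K * (z 0 * z 2 * z 3 * p0 z * p0 z)^k)"
    proof -
      have w1: "w 1 = 0" unfolding w_def by simp
      have "f w = (\<Sum>j<n. coeff (cp w) (2*j) * (p0 w / (w 0 * w 2))^j) / (w 0 ^ K * (w 0 * w 2 * w 3 * p0 w * p0 w)^k)"
        using mainf Ew w1 by blast
      then show ?thesis unfolding cw by (simp add: w_def)
    qed
    also have "\<dots> = (\<Sum>j<n. coeff (cp z) (2*j) * (p0 z / (z 0 * z 2))^j / (z 0 ^ K * (z 0 * z 2 * z 3 * p0 z * p0 z)^k))"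
      by (rule sum_divide_distrib)
    also have "\<dots> = (\<Sum>j<n. a (int j - int (2*k)) z * (p0 z) powi (int j - int (2*k)))"
    proof (rule sum.cong[OF refl])
      fix j assume "j \<in> {..<n}"
      have nj: "nat (int j - int (2*k) + int (2*k)) = j" by simp
      show "coeff (cp z) (2*j) * (p0 z / (z 0 * z 2))^j / (z 0 ^ K * (z 0 * z 2 * z 3 * p0 z * p0 z)^k)
          = a (int j - int (2*k)) z * (p0 z) powi (int j - int (2*k))"
      proof -
        have "a (int j - int (2*k)) z * (p0 z) powi (int j - int (2*k))
          = coeff (cp z) (2*j) / (z 0 ^ K * (z 0 * z 2 * z 3)^k * (z 0 * z 2)^j) * (p0 z ^ j / p0 z ^ (2*k))"
          unfolding a_def nj powi_split[OF nz(4)] using True by simp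
        also have "\<dots> = coeff (cp z) (2*j) * (p0 z / (z 0 * z 2))^j / (z 0 ^ K * (z 0 * z 2 * z 3 * p0 z * p0 z)^k)"
          by (rule term_eq[OF nz(4) nz(1) nz(2) nz(3)])
        finally show ?thesis by (rule sym)
      qed
    qed
    also have "\<dots> = (\<Sum>i\<in>{-int (2*k)..int n - 1 - int (2*k)}. a i z * (p0 z) powi i)"
      by (rule reidx[symmetric])
    finally show ?thesis .
  qed
  show ?thesis
    by (rule exI[of _ "int (2*k)"], rule exI[of _ "int n - 1 - int (2*k)"], rule exI[of _ a])
       (use aM sumeq in auto)
qed


end
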